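(* Fix a cell with no source term ($S=0$) and total energy $E=1$, a positive integer $N_{obj}$, $w_{obj}=1/N_{obj}$, and an initial population $X_0$ of $N_0\le N_{obj}$ particles with positive weights summing to $1$. Apply repeatedly the cell-based population control step with conservative splitting described in the context, and let $X_l=(X_l^1,\dots,X_l^{N_l})$ be the (positive) weights after $l$ iterations. Then: (1) for every $l\ge1$, $\dfrac{\max_j\{X_l^j: X_l^j\neq0\}}{\min_j\{X_l^j: X_l^j\neq0\}}\le4$; (2) for every $l\ge0$, $N_l\le 6N_{obj}$; (3) for every $l\ge1$, $\min_j\{X_l^j: X_l^j\neq0\}\ge w_{obj}/10$.
   Context: Cell-based population control step for a single cell with existing particle weights $w_1,\dots,w_N$, $E=\sum_pw_p$, source $S\ge0$, target number $N_{obj}\ge1$ and $E+S>0$: set $w_{obj}=(E+S)/N_{obj}$; if $S>0$ emit $N^{vol}=\max(1,\lfloor S/w_{obj}\rfloor)$ particles of weight $S/N^{vol}$. If $E>0$, for each existing particle draw independently $u_p\sim\mathcal U(0,1)$, $I_p=\lfloor w_p/w_{obj}\rfloor$, $R_p=w_p/w_{obj}-I_p$; if $I_p=0$ (Russian Roulette) the particle is killed if $R_p<u_p$, otherwise its weight becomes $w_{obj}$; if $I_p\ge1$ (conservative Splitting) it is replaced by $N^{split}_p=I_p+\mathbf 1_{\{u_p<R_p\}}$ copies each of weight $w_p/N^{split}_p$. Then all weights are multiplied by a common factor so that the total is $E+S$. Non-void correction: if $S=0$ and no particle remains, the population becomes one particle of weight $E$. Successive iterations use fresh independent uniform variables. 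*)

theory Defs
  imports Complex_Main
begin

definition pc_particle :: "real \<Rightarrow> real \<Rightarrow> real \<Rightarrow> real list" where
  "pc_particle wobj u w =
     (let I = \<lfloor>w / wobj\<rfloor>; R = w / wobj - of_int I in
      if I = 0 then (if R < u then [] else [wobj])
      else (let Ns = nat I + (if u < R then 1 else 0) in replicate Ns (w / real Ns)))"

text \<open>One cell-based population control step: source S, target number Nobj,
  uniform draws us (one per existing particle), existing weights ws.\<close>
definition pc_step :: "real \<Rightarrow> nat \<Rightarrow> real list \<Rightarrow> real list \<Rightarrow> real list" where
  "pc_step S Nobj us ws =
     (let E = sum_list ws;
          wobj = (E + S) / real Nobj;
          Nvol = max 1 (nat \<lfloor>S / wobj\<rfloor>);
          src = (if S > 0 then replicate Nvol (S / real Nvol) else []);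
          ex = (if E > 0 then concat (map (\<lambda>(w, u). pc_particle wobj u w) (zip ws us)) else ws);
          pop = src @ ex;
          tot = sum_list pop;
          scaled = map (\<lambda>x. x * ((E + S) / tot)) pop
      in if S = 0 \<and> pop = [] then [E] else scaled)"

definition nzw :: "real list \<Rightarrow> real set" where
  "nzw xs = {x \<in> set xs. x \<noteq> 0}"

end

theory Submission imports Defs begin

lemma part_small:
  assumes "0 < wobj" "0 < w" "w < wobj"
  shows "pc_particle wobj u w = [] \<or> pc_particle wobj u w = [wobj]"
proof -
  have "\<lfloor>w / wobj\<rfloor> = 0" using assms by (simp add: floor_eq_iff)
  then show ?thesis unfolding pc_particle_def Let_def by auto
qed

lemma part_big:
  assumes "0 < wobj" "wobj \<le> w"
  shows "\<exists>Ns::nat. Ns \<ge> 1 \<and> pc_particle wobj u w = replicate Ns (w / real Ns)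
           \<and> real Ns \<le> 2 * (w / wobj) \<and> w / wobj < 2 * real Ns"
proof -
  define I where "I = \<lfloor>w / wobj\<rfloor>"
  have y1: "1 \<le> w / wobj" using assms by simp
  have I1: "I \<ge> 1" unfolding I_def using y1 by (simp add: le_floor_iff)
  have Ile: "real_of_int I \<le> w / wobj" "w / wobj < real_of_int I + 1" unfolding I_def by linarith+
  define Ns where "Ns = nat I + (if u < w / wobj - of_int I then 1 else 0)"
  have eq: "pc_particle wobj u w = replicate Ns (w / real Ns)"
    unfolding pc_particle_def Let_def Ns_def I_def[symmetric] using I1 by simp
  have r: "real Ns = real_of_int I \<or> real Ns = real_of_int I + 1"
    unfolding Ns_def using I1 by auto
  show ?thesis
    apply (rule exI[of _ Ns])
    using eq r I1 Ile by (auto simp: Ns_def)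
qed

lemma part_elems:
  assumes "0 < wobj" "0 < w" "x \<in> set (pc_particle wobj u w)"
  shows "wobj / 2 \<le> x \<and> x < 2 * wobj"
proof (cases "w < wobj")
  case True then show ?thesis using part_small[OF assms(1,2) True, of u] assms(1,3) by auto
next
  case False
  then obtain Ns :: nat where N: "Ns \<ge> 1" "pc_particle wobj u w = replicate Ns (w / real Ns)"
     "real Ns \<le> 2 * (w / wobj)" "w / wobj < 2 * real Ns" using part_big[OF assms(1), of w u] by auto
  have x: "x = w / real Ns" using N(2) assms(3) by simp
  have Np: "real Ns > 0" using N(1) by simp
  have "wobj / 2 \<le> w / real Ns"
    using N(3) Np assms(1) by (simp add: field_simps)
  moreover have "w / real Ns < 2 * wobj"
    using N(4) Np assms(1) by (simp add: field_simps)
  ultimately show ?thesis using x by simp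
qed

lemma part_small_elems:
  assumes "0 < wobj" "0 < w" "w < wobj" "x \<in> set (pc_particle wobj u w)"
  shows "x = wobj"
  using part_small[OF assms(1-3), of u] assms(4) by auto

lemma part_len:
  assumes "0 < wobj" "0 < w"
  shows "real (length (pc_particle wobj u w)) \<le> (if wobj \<le> w then 2 * (w / wobj) else 1)"
proof (cases "w < wobj")
  case True then show ?thesis using part_small[OF assms True, of u] by auto
next
  case False
  then obtain Ns :: nat where N: "Ns \<ge> 1" "pc_particle wobj u w = replicate Ns (w / real Ns)"
     "real Ns \<le> 2 * (w / wobj)" "w / wobj < 2 * real Ns" using part_big[OF assms(1), of w u] by auto
  then show ?thesis using False by simp
qed

lemma part_sum:
  assumes "0 < wobj" "0 < w"
  shows "sum_list (pc_particle wobj u w) \<le> (if wobj \<le> w then w else wobj)"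
proof (cases "w < wobj")
  case True then show ?thesis using part_small[OF assms True, of u] assms(1) by auto
next
  case False
  then obtain Ns :: nat where N: "Ns \<ge> 1" "pc_particle wobj u w = replicate Ns (w / real Ns)"
     "real Ns \<le> 2 * (w / wobj)" "w / wobj < 2 * real Ns" using part_big[OF assms(1), of w u] by auto
  then show ?thesis using False by (simp add: sum_list_replicate)
qed


definition popl :: "real \<Rightarrow> real list \<Rightarrow> real list \<Rightarrow> real list" where
  "popl wobj us ws = concat (map (\<lambda>(w, u). pc_particle wobj u w) (zip ws us))"

lemma pop_elems:
  assumes "0 < wobj" "\<forall>w\<in>set ws. 0 < w" "x \<in> set (popl wobj us ws)"
  shows "wobj / 2 \<le> x \<and> x < 2 * wobj"
  using assms part_elems unfolding popl_def by (auto dest!: set_zip_leftD)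

lemma pop_small:
  assumes "0 < wobj" "\<forall>w\<in>set ws. 0 < w \<and> w < wobj" "x \<in> set (popl wobj us ws)"
  shows "x = wobj"
  using assms part_small_elems unfolding popl_def by (auto dest!: set_zip_leftD)

lemma pop_len:
  assumes "0 < wobj" "length ws = length us" "\<forall>w\<in>set ws. 0 < w"
  shows "real (length (popl wobj us ws)) \<le> sum_list (map (\<lambda>w. if wobj \<le> w then 2 * (w / wobj) else 1) ws)"
  using assms(2,3)
proof (induction ws us rule: list_induct2)
  case Nil then show ?case by (simp add: popl_def)
next
  case (Cons w ws u us)
  have "real (length (pc_particle wobj u w)) \<le> (if wobj \<le> w then 2 * (w / wobj) else 1)"
    using part_len[OF assms(1)] Cons.prems by simp
  then show ?case using Cons by (simp add: popl_def)
qed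

lemma pop_sum:
  assumes "0 < wobj" "length ws = length us" "\<forall>w\<in>set ws. 0 < w"
  shows "sum_list (popl wobj us ws) \<le> sum_list (map (\<lambda>w. if wobj \<le> w then w else wobj) ws)"
  using assms(2,3)
proof (induction ws us rule: list_induct2)
  case Nil then show ?case by (simp add: popl_def)
next
  case (Cons w ws u us)
  have "sum_list (pc_particle wobj u w) \<le> (if wobj \<le> w then w else wobj)"
    using part_sum[OF assms(1)] Cons.prems by simp
  then show ?case using Cons by (simp add: popl_def)
qed

lemma step_unfold:
  assumes "sum_list ws = 1"
  shows "pc_step 0 Nobj us ws = (if popl (1 / real Nobj) us ws = [] then [1]
     else map (\<lambda>x. x * (1 / sum_list (popl (1 / real Nobj) us ws))) (popl (1 / real Nobj) us ws))"
  using assms unfolding pc_step_def Let_def popl_def by simp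


lemma step:
  assumes N: "Nobj \<ge> 1" and pos: "\<forall>w\<in>set ws. 0 < w" and s1: "sum_list ws = 1"
    and len: "length ws \<le> 6 * Nobj" and lu: "length us = length ws"
    and pre: "length ws \<le> Nobj \<or> (\<forall>x\<in>set ws. \<forall>y\<in>set ws. x \<le> 4 * y)"
  shows "(\<forall>w\<in>set (pc_step 0 Nobj us ws). 0 < w) \<and> sum_list (pc_step 0 Nobj us ws) = 1
    \<and> length (pc_step 0 Nobj us ws) \<le> 6 * Nobj
    \<and> (\<forall>x\<in>set (pc_step 0 Nobj us ws). \<forall>y\<in>set (pc_step 0 Nobj us ws). x \<le> 4 * y)
    \<and> (\<forall>x\<in>set (pc_step 0 Nobj us ws). 1 / real Nobj / 10 \<le> x)"
proof -
  define wobj where "wobj = 1 / real Nobj"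
  define pop where "pop = popl wobj us ws"
  have Npos: "real Nobj \<ge> 1" using N by simp
  have wpos: "wobj > 0" unfolding wobj_def using Npos by simp
  have eq: "pc_step 0 Nobj us ws = (if pop = [] then [1] else map (\<lambda>x. x * (1 / sum_list pop)) pop)"
    using step_unfold[OF s1] unfolding pop_def wobj_def by simp
  show ?thesis
  proof (cases "pop = []")
    case True
    then show ?thesis using eq N Npos by (simp add: field_simps)
  next
    case False
    define T where "T = sum_list pop"
    have el: "\<And>x. x \<in> set pop \<Longrightarrow> wobj / 2 \<le> x \<and> x < 2 * wobj"
      using pop_elems[OF wpos pos] unfolding pop_def by blast
    have "sum_list (map (\<lambda>_. wobj / 2) pop) \<le> sum_list (map (\<lambda>x. x) pop)"
      by (rule sum_list_mono) (use el in auto)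
    then have "real (length pop) * (wobj / 2) \<le> T" unfolding T_def by (simp add: sum_list_triv)
    moreover have "real (length pop) \<ge> 1" using False by (cases pop) auto
    moreover have "0 < real (length pop) * (wobj / 2)" using False wpos by simp
    ultimately have Tpos: "T > 0" by linarith
    have lenpop: "real (length pop) \<le> sum_list (map (\<lambda>w. if wobj \<le> w then 2 * (w / wobj) else 1) ws)"
      using pop_len[OF wpos lu[symmetric] pos] unfolding pop_def .
    have sumpop: "T \<le> sum_list (map (\<lambda>w. if wobj \<le> w then w else wobj) ws)"
      using pop_sum[OF wpos lu[symmetric] pos] unfolding pop_def T_def .
    have wdiv: "\<And>w. w / wobj = real Nobj * w" unfolding wobj_def by simp
    have key: "real (length pop) \<le> 6 * real Nobj \<and> (\<forall>x\<in>set pop. wobj / 10 \<le> x / T)"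
    proof (cases "length ws \<le> Nobj")
      case True
      have "sum_list (map (\<lambda>w. if wobj \<le> w then 2 * (w / wobj) else 1) ws)
          \<le> sum_list (map (\<lambda>w. (2 * real Nobj) * w + 1) ws)"
        by (rule sum_list_mono) (use pos wdiv in auto)
      also have "\<dots> = 2 * real Nobj + real (length ws)"
        by (simp add: sum_list_addf sum_list_const_mult s1 sum_list_triv)
      finally have l1: "real (length pop) \<le> 6 * real Nobj" using lenpop True by linarith
      have "sum_list (map (\<lambda>w. if wobj \<le> w then w else wobj) ws)
          \<le> sum_list (map (\<lambda>w. w + wobj) ws)"
        by (rule sum_list_mono) (use pos wpos in auto)
      also have "\<dots> = 1 + real (length ws) * wobj"
        by (simp add: sum_list_addf s1 sum_list_triv)
      also have "\<dots> \<le> 2" using True Npos unfolding wobj_def by (simp add: field_simps)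
      finally have T2: "T \<le> 2" using sumpop by linarith
      have "\<forall>x\<in>set pop. wobj / 10 \<le> x / T"
      proof
        fix x assume "x \<in> set pop"
        then have "wobj / 2 \<le> x" using el by blast
        moreover have "x / 2 \<le> x / T" using T2 Tpos \<open>wobj / 2 \<le> x\<close> wpos
          by (intro divide_left_mono) auto
        ultimately show "wobj / 10 \<le> x / T" using wpos by linarith
      qed
      then show ?thesis using l1 by blast
    next
      case False
      then have rat: "\<forall>x\<in>set ws. \<forall>y\<in>set ws. x \<le> 4 * y" using pre by simp
      show ?thesis
      proof (cases "\<exists>w\<in>set ws. wobj \<le> w")
        case True
        then obtain w0 where w0: "w0 \<in> set ws" "wobj \<le> w0" by blast
        have low: "wobj / 4 \<le> w" if wi: "w \<in> set ws" for w
        proof -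
          have "w0 \<le> 4 * w" using rat w0(1) wi by blast
          then show ?thesis using w0(2) by linarith
        qed
        have "sum_list (map (\<lambda>w. if wobj \<le> w then 2 * (w / wobj) else 1) ws)
            \<le> sum_list (map (\<lambda>w. (6 * real Nobj) * w) ws)"
        proof (rule sum_list_mono)
          fix w assume wi: "w \<in> set ws"
          have "1 \<le> real Nobj * (4 * w)" using low[OF wi] Npos unfolding wobj_def
            by (simp add: field_simps)
          then show "(if wobj \<le> w then 2 * (w / wobj) else 1) \<le> (6 * real Nobj) * w"
            using pos wi wdiv Npos by auto
        qed
        also have "\<dots> = 6 * real Nobj" by (simp add: sum_list_const_mult s1)
        finally have l1: "real (length pop) \<le> 6 * real Nobj" using lenpop by linarith
        have "sum_list (map (\<lambda>w. if wobj \<le> w then w else wobj) ws)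
            \<le> sum_list (map (\<lambda>w. 5 * w) ws)"
        proof (rule sum_list_mono)
          fix w assume wi: "w \<in> set ws"
          show "(if wobj \<le> w then w else wobj) \<le> 5 * w" using low[OF wi] pos wi by auto
        qed
        also have "\<dots> = 5" by (simp add: sum_list_const_mult s1)
        finally have T5: "T \<le> 5" using sumpop by linarith
        have "\<forall>x\<in>set pop. wobj / 10 \<le> x / T"
        proof
          fix x assume "x \<in> set pop"
          then have "wobj / 2 \<le> x" using el by blast
          moreover have "x / 5 \<le> x / T" using T5 Tpos \<open>wobj / 2 \<le> x\<close> wpos
            by (intro divide_left_mono) auto
          ultimately show "wobj / 10 \<le> x / T" by linarith
        qed
        then show ?thesis using l1 by blast
      next
        case nb: False
        have sm: "\<forall>w\<in>set ws. 0 < w \<and> w < wobj" using pos nb by auto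
        have allw: "\<And>x. x \<in> set pop \<Longrightarrow> x = wobj"
          using pop_small[OF wpos sm] unfolding pop_def by blast
        have "sum_list (map (\<lambda>w. if wobj \<le> w then 2 * (w / wobj) else 1) ws)
            = sum_list (map (\<lambda>w. 1) ws)"
          by (rule arg_cong[where f=sum_list], rule map_cong) (use nb in auto)
        then have l1: "real (length pop) \<le> 6 * real Nobj" using lenpop len
          by (simp add: sum_list_triv)
        have popr: "pop = replicate (length pop) wobj"
          using allw by (simp add: replicate_length_same)
        have Teq: "T = real (length pop) * wobj" unfolding T_def
          by (subst popr) (simp add: sum_list_replicate)
        have "\<forall>x\<in>set pop. wobj / 10 \<le> x / T"
        proof
          fix x assume "x \<in> set pop"
          then have "x / T = 1 / real (length pop)" using allw Teq wpos by simp
          also have "\<dots> \<ge> 1 / (6 * real Nobj)"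
          proof -
            have pp: "0 < (6 * real Nobj) * real (length pop)"
              by (rule mult_pos_pos) (use Npos \<open>real (length pop) \<ge> 1\<close> in linarith)+
            show ?thesis by (rule divide_left_mono[OF l1 _ pp]) simp
          qed
          finally show "wobj / 10 \<le> x / T" unfolding wobj_def using Npos
            by (simp add: field_simps)
        qed
        then show ?thesis using l1 by blast
      qed
    qed
    have res: "pc_step 0 Nobj us ws = map (\<lambda>x. x / T) pop" using eq False unfolding T_def by simp
    have "sum_list (map (\<lambda>x. x / T) pop) = sum_list (map (\<lambda>x. (1 / T) * x) pop)" by simp
    also have "\<dots> = (1 / T) * sum_list (map (\<lambda>x. x) pop)" by (rule sum_list_const_mult)
    also have "\<dots> = 1" using Tpos unfolding T_def by simp
    finally have "sum_list (map (\<lambda>x. x / T) pop) = 1" .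
    moreover have "\<forall>x\<in>set pop. \<forall>y\<in>set pop. x / T \<le> 4 * (y / T)"
    proof (intro ballI)
      fix x y assume "x \<in> set pop" "y \<in> set pop"
      then have "x < 2 * wobj" "wobj / 2 \<le> y" using el by blast+
      then have "x \<le> 4 * y" by linarith
      then show "x / T \<le> 4 * (y / T)" using Tpos by (simp add: divide_right_mono)
    qed
    moreover have "\<forall>x\<in>set pop. 0 < x / T"
    proof
      fix x assume "x \<in> set pop"
      then have "wobj / 2 \<le> x" using el by blast
      then show "0 < x / T" using wpos Tpos by simp
    qed
    ultimately show ?thesis using res key unfolding wobj_def by auto
  qed
qed


lemma nzw_pos: "\<forall>x\<in>set xs. 0 < x \<Longrightarrow> nzw xs = set xs"
  unfolding nzw_def by auto

theorem lemma5:
  fixes Nobj :: nat and X :: "nat \<Rightarrow> real list" and U :: "nat \<Rightarrow> real list"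
  assumes "Nobj \<ge> 1"
    and "\<forall>x\<in>set (X 0). x > 0"
    and "sum_list (X 0) = 1"
    and "length (X 0) \<le> Nobj"
    and "\<And>l. length (U l) = length (X l)"
    and "\<And>l. \<forall>u\<in>set (U l). 0 < u \<and> u < 1"
    and "\<And>l. X (Suc l) = pc_step 0 Nobj (U l) (X l)"
  shows "(\<forall>l\<ge>1. Max (nzw (X l)) / Min (nzw (X l)) \<le> 4)
       \<and> (\<forall>l. length (X l) \<le> 6 * Nobj)
       \<and> (\<forall>l\<ge>1. Min (nzw (X l)) \<ge> (1 / real Nobj) / 10)"
proof -
  define P where "P ws \<longleftrightarrow> (\<forall>w\<in>set ws. 0 < w) \<and> sum_list ws = 1 \<and> length ws \<le> 6 * Nobj
     \<and> (length ws \<le> Nobj \<or> (\<forall>x\<in>set ws. \<forall>y\<in>set ws. x \<le> 4 * y))" for ws :: "real list"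
  have stepl: "P (X l) \<Longrightarrow> (\<forall>w\<in>set (X (Suc l)). 0 < w) \<and> sum_list (X (Suc l)) = 1
    \<and> length (X (Suc l)) \<le> 6 * Nobj
    \<and> (\<forall>x\<in>set (X (Suc l)). \<forall>y\<in>set (X (Suc l)). x \<le> 4 * y)
    \<and> (\<forall>x\<in>set (X (Suc l)). 1 / real Nobj / 10 \<le> x)" for l
  proof -
    assume "P (X l)"
    then have p: "\<forall>w\<in>set (X l). 0 < w" "sum_list (X l) = 1" "length (X l) \<le> 6 * Nobj"
      "length (X l) \<le> Nobj \<or> (\<forall>x\<in>set (X l). \<forall>y\<in>set (X l). x \<le> 4 * y)"
      unfolding P_def by blast+
    show ?thesis unfolding assms(7)[of l] by (rule step[OF assms(1) p(1-3) assms(5) p(4)])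
  qed
  have allP: "P (X l)" for l
  proof (induction l)
    case 0
    have "length (X 0) \<le> 6 * Nobj" using assms(4) by linarith
    then show ?case unfolding P_def using assms(2-4) by blast
  next
    case (Suc l)
    have "\<forall>x\<in>set (X (Suc l)). \<forall>y\<in>set (X (Suc l)). x \<le> 4 * y" using stepl[OF Suc] by blast
    then show ?case using stepl[OF Suc] unfolding P_def by blast
  qed
  have ne: "set (X l) \<noteq> {}" for l
  proof -
    have "sum_list (X l) = 1" using allP[of l] unfolding P_def by blast
    then show ?thesis by (cases "X l") auto
  qed
  have nz: "nzw (X l) = set (X l)" for l
  proof -
    have "\<forall>w\<in>set (X l). 0 < w" using allP[of l] unfolding P_def by blast
    then show ?thesis by (rule nzw_pos)
  qed
  have c1: "Max (nzw (X l)) / Min (nzw (X l)) \<le> 4" if "l \<ge> 1" for l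
  proof -
    define k where "k = l - 1"
    have k: "l = Suc k" using that unfolding k_def by simp
    have st: "(\<forall>w\<in>set (X l). 0 < w) \<and> (\<forall>x\<in>set (X l). \<forall>y\<in>set (X l). x \<le> 4 * y)"
      using stepl[OF allP[of k]] k by blast
    have mx: "Max (set (X l)) \<in> set (X l)" and mn: "Min (set (X l)) \<in> set (X l)"
      using ne[of l] by auto
    have st1: "\<forall>w\<in>set (X l). 0 < w" and st2: "\<forall>x\<in>set (X l). \<forall>y\<in>set (X l). x \<le> 4 * y"
      using st by blast+
    have "Max (set (X l)) \<le> 4 * Min (set (X l))" using st2 mx mn by blast
    moreover have "Min (set (X l)) > 0" using st1 mn by blast
    ultimately show ?thesis unfolding nz using pos_divide_le_eq[of "Min (set (X l))" "Max (set (X l))" 4]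
      by (simp add: mult.commute)
  qed
  have c3: "Min (nzw (X l)) \<ge> (1 / real Nobj) / 10" if "l \<ge> 1" for l
  proof -
    define k where "k = l - 1"
    have k: "l = Suc k" using that unfolding k_def by simp
    have st: "\<forall>x\<in>set (X l). 1 / real Nobj / 10 \<le> x"
      using stepl[OF allP[of k]] k by blast
    have mn: "Min (set (X l)) \<in> set (X l)" using ne[of l] by auto
    show ?thesis unfolding nz using st mn by blast
  qed
  have c2: "length (X l) \<le> 6 * Nobj" for l using allP[of l] unfolding P_def by blast
  show ?thesis using c1 c2 c3 by blast
qed

end
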